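(* Let $n\ge 1$ and $r\in\{0,1,\dots,n-1\}$. For permutations $\mathbf{u},\mathbf{v}\in S_n$ in one-line notation $\mathbf{u}=[u(1),\dots,u(n)]$, $\mathbf{v}=[v(1),\dots,v(n)]$, define the cost $C(\mathbf{u}\to\mathbf{v})=\max_{i\in\{1,\dots,n\}}\bigl(v^{-1}(i)-u^{-1}(i)\bigr)$, and for $\mathbf{u}\in S_n$ define the ball $B_{n,r}(\mathbf{u})=\{\mathbf{v}\in S_n : C(\mathbf{u}\to\mathbf{v})\le r\}$. Then for every $\mathbf{u}\in S_n$, $$|B_{n,r}(\mathbf{u})|=r!\,(r+1)^{n-r}.$$
   Context: Here $u^{-1}(i)$ denotes the position of the element $i$ in the sequence $[u(1),\dots,u(n)]$, and similarly for $v^{-1}$. The cost $C(\mathbf{u}\to\mathbf{v})$ is thus the maximum, over elements $i$, of the increase in position of $i$ when passing from $\mathbf{u}$ to $\mathbf{v}$. *)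

theory Defs
  imports Main "HOL-Combinatorics.Permutations"
begin

text \<open>A permutation of S_n in one-line notation [u(1),...,u(n)] is a function
  u with u permutes {1..n}; the position of element i is inv u i.\<close>

definition cost :: "nat \<Rightarrow> (nat \<Rightarrow> nat) \<Rightarrow> (nat \<Rightarrow> nat) \<Rightarrow> int" where
  "cost n u v = Max ((\<lambda>i. int (inv v i) - int (inv u i)) ` {1..n})"

definition perm_ball :: "nat \<Rightarrow> nat \<Rightarrow> (nat \<Rightarrow> nat) \<Rightarrow> (nat \<Rightarrow> nat) set" where
  "perm_ball n r u = {v. v permutes {1..n} \<and> cost n u v \<le> int r}"

end

theory Submission
  imports Defs
begin

definition G :: "nat \<Rightarrow> nat \<Rightarrow> (nat \<Rightarrow> nat) set" where
  "G r m = {p. p permutes {1..m} \<and> (\<forall>k\<in>{1..m}. k \<le> p k + r)}"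

lemma cond_iff:
  assumes p: "p permutes {1..m}" and b: "b \<in> {1..Suc m}"
  shows "(\<forall>k\<in>{1..Suc m}. k \<le> (transpose (Suc m) b \<circ> p) k + r) \<longleftrightarrow>
         (Suc m \<le> b + r \<and> (\<forall>k\<in>{1..m}. k \<le> p k + r))"
proof -
  have pS: "p (Suc m) = Suc m" using p by (simp add: permutes_def)
  have q1: "(transpose (Suc m) b \<circ> p) (Suc m) = b" using pS by simp
  have q2: "(transpose (Suc m) b \<circ> p) k = (if p k = b then Suc m else p k)"
    if "k \<in> {1..m}" for k
  proof -
    have "p k \<in> {1..m}" using permutes_in_image[OF p] that by blast
    then show ?thesis by (auto simp: transpose_def)
  qed
  show ?thesis
  proof
    assume H: "\<forall>k\<in>{1..Suc m}. k \<le> (transpose (Suc m) b \<circ> p) k + r"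
    have A: "Suc m \<le> b + r" using H[rule_format, of "Suc m"] q1 by simp
    moreover have "\<forall>k\<in>{1..m}. k \<le> p k + r"
    proof
      fix k assume k: "k \<in> {1..m}"
      show "k \<le> p k + r"
      proof (cases "p k = b")
        case True then show ?thesis using A k by auto
      next
        case False then show ?thesis using H[rule_format, of k] q2[OF k] k by auto
      qed
    qed
    ultimately show "Suc m \<le> b + r \<and> (\<forall>k\<in>{1..m}. k \<le> p k + r)" by blast
  next
    assume H: "Suc m \<le> b + r \<and> (\<forall>k\<in>{1..m}. k \<le> p k + r)"
    show "\<forall>k\<in>{1..Suc m}. k \<le> (transpose (Suc m) b \<circ> p) k + r"
    proof
      fix k assume k: "k \<in> {1..Suc m}"
      show "k \<le> (transpose (Suc m) b \<circ> p) k + r"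
      proof (cases "k = Suc m")
        case True then show ?thesis using H q1 by simp
      next
        case False then have k': "k \<in> {1..m}" using k by auto
        then show ?thesis using H q2[OF k'] by auto
      qed
    qed
  qed
qed

lemma G_Suc:
  "G r (Suc m) = (\<lambda>(b, p). transpose (Suc m) b \<circ> p) `
      ({b. b \<in> {1..Suc m} \<and> Suc m \<le> b + r} \<times> G r m)"
proof -
  have ins: "{1..Suc m} = insert (Suc m) {1..m}" by auto
  have PI: "{p. p permutes {1..Suc m}} =
    (\<lambda>(b, p). transpose (Suc m) b \<circ> p) ` {(b, p). b \<in> {1..Suc m} \<and> p \<in> {p. p permutes {1..m}}}"
    unfolding ins by (rule permutes_insert)
  show ?thesis (is "_ = ?R")
  proof
    show "G r (Suc m) \<subseteq> ?R"
    proof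
      fix q assume q: "q \<in> G r (Suc m)"
      then have "q \<in> {p. p permutes {1..Suc m}}" by (simp add: G_def)
      from this[unfolded PI] obtain x where x: "x \<in> {(b, p). b \<in> {1..Suc m} \<and> p \<in> {p. p permutes {1..m}}}"
        "q = (\<lambda>(b, p). transpose (Suc m) b \<circ> p) x" by (rule imageE)
      obtain b p where xbp: "x = (b, p)" by (cases x)
      have bp: "q = transpose (Suc m) b \<circ> p" "b \<in> {1..Suc m}" "p permutes {1..m}"
        using x unfolding xbp by simp_all
      have c: "\<forall>k\<in>{1..Suc m}. k \<le> q k + r" using q by (simp add: G_def)
      have d: "Suc m \<le> b + r \<and> (\<forall>k\<in>{1..m}. k \<le> p k + r)"
        using cond_iff[OF bp(3) bp(2)] c unfolding bp(1) by blast
      have "(b, p) \<in> {b. b \<in> {1..Suc m} \<and> Suc m \<le> b + r} \<times> G r m"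
        using d bp(2,3) unfolding G_def by blast
      then show "q \<in> ?R" by (rule rev_image_eqI) (simp add: bp(1))
    qed
  next
    show "?R \<subseteq> G r (Suc m)"
    proof
      fix q assume "q \<in> ?R"
      then obtain x where x: "x \<in> {b. b \<in> {1..Suc m} \<and> Suc m \<le> b + r} \<times> G r m"
        "q = (\<lambda>(b, p). transpose (Suc m) b \<circ> p) x" by (rule imageE)
      obtain b p where xbp: "x = (b, p)" by (cases x)
      have bpm: "(b, p) \<in> {b. b \<in> {1..Suc m} \<and> Suc m \<le> b + r} \<times> G r m"
        and qd: "q = transpose (Suc m) b \<circ> p" using x unfolding xbp by simp_all
      have bp: "b \<in> {1..Suc m}" "Suc m \<le> b + r"
        "p permutes {1..m}" "\<forall>k\<in>{1..m}. k \<le> p k + r" using bpm unfolding G_def by blast+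
      have "(b, p) \<in> {(b, p). b \<in> {1..Suc m} \<and> p \<in> {p. p permutes {1..m}}}" using bp by blast
      then have "transpose (Suc m) b \<circ> p \<in> {p. p permutes {1..Suc m}}" unfolding PI
        by (rule rev_image_eqI) simp
      then have "q permutes {1..Suc m}" using qd by simp
      moreover have "\<forall>k\<in>{1..Suc m}. k \<le> q k + r"
        using cond_iff[OF bp(3) bp(1)] bp(2,4) unfolding qd by blast
      ultimately show "q \<in> G r (Suc m)" by (simp add: G_def)
    qed
  qed
qed

lemma G_inj:
  "inj_on (\<lambda>(b, p). transpose (Suc m) b \<circ> p) (B \<times> G r m)"
proof (rule inj_onI, clarify)
  fix b p c q
  assume p: "p \<in> G r m" and q: "q \<in> G r m"
    and eq: "transpose (Suc m) b \<circ> p = transpose (Suc m) c \<circ> q"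
  have pa: "p (Suc m) = Suc m" and qa: "q (Suc m) = Suc m"
    using p q by (auto simp: G_def permutes_def)
  from eq have "(transpose (Suc m) b \<circ> p) (Suc m) = (transpose (Suc m) c \<circ> q) (Suc m)" by simp
  then have bc: "b = c" using pa qa by simp
  from eq have "transpose (Suc m) c \<circ> (transpose (Suc m) b \<circ> p) = transpose (Suc m) c \<circ> (transpose (Suc m) c \<circ> q)"
    by simp
  then have "p = q" using bc by (metis comp_assoc transpose_comp_involutory id_comp)
  then show "b = c \<and> p = q" using bc by simp
qed

lemma card_B: "card {b. b \<in> {1..Suc m} \<and> Suc m \<le> b + r} = min (Suc m) (r + 1)"
proof -
  have "{b. b \<in> {1..Suc m} \<and> Suc m \<le> b + r} = {max 1 (Suc m - r)..Suc m}" by auto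
  then show ?thesis by auto
qed

lemma finite_G: "finite (G r m)"
proof -
  have "G r m \<subseteq> {p. p permutes {1..m}}" by (auto simp: G_def)
  then show ?thesis using finite_permutations[of "{1..m}"] finite_subset by blast
qed

lemma card_G: "card (G r m) = (\<Prod>k=1..m. min k (r + 1))"
proof (induction m)
  case 0
  have "G r 0 = {id}" by (auto simp: G_def)
  then show ?case by simp
next
  case (Suc m)
  have fB: "finite {b. b \<in> {1..Suc m} \<and> Suc m \<le> b + r}" by simp
  have "card (G r (Suc m)) = card ({b. b \<in> {1..Suc m} \<and> Suc m \<le> b + r} \<times> G r m)"
    unfolding G_Suc by (rule card_image[OF G_inj])
  also have "\<dots> = min (Suc m) (r + 1) * card (G r m)"
    by (simp only: card_cartesian_product card_B)
  finally show ?case using Suc by (simp add: prod.nat_ivl_Suc' mult.commute)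
qed

lemma prod_min: "r \<le> n \<Longrightarrow> (\<Prod>k=1..n. min k (r + 1)) = fact r * (r + 1) ^ (n - r)"
proof (induction n rule: dec_induct)
  case base
  have "(\<Prod>k=1..r. min k (r + 1)) = (\<Prod>k=1..r. k)" by (rule prod.cong) auto
  then show ?case by (simp add: fact_prod)
next
  case (step n)
  then show ?case by (simp add: prod.nat_ivl_Suc' Suc_diff_le algebra_simps)
qed

theorem theorem2:
  fixes n r :: nat and u :: "nat \<Rightarrow> nat"
  assumes "n \<ge> 1" and "r < n" and "u permutes {1..n}"
  shows "card (perm_ball n r u) = fact r * (r + 1) ^ (n - r)"
proof -
  have u: "u permutes {1..n}" by fact
  have ne: "{1..n} \<noteq> {}" using assms(1) by auto
  have ball: "perm_ball n r u = {v. v permutes {1..n} \<and> (\<forall>i\<in>{1..n}. inv v i \<le> inv u i + r)}"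
    unfolding perm_ball_def cost_def using ne by (auto simp: Max_le_iff)
  have "bij_betw (\<lambda>v. inv u \<circ> v) (perm_ball n r u) (G r n)"
  proof (rule bij_betw_byWitness[where f' = "\<lambda>p. u \<circ> p"])
    show "\<forall>v\<in>perm_ball n r u. u \<circ> (inv u \<circ> v) = v"
      using permutes_inverses(1)[OF u] by (auto simp: fun_eq_iff)
    show "\<forall>p\<in>G r n. inv u \<circ> (u \<circ> p) = p"
      using permutes_inverses(2)[OF u] by (auto simp: fun_eq_iff)
    show "(\<lambda>v. inv u \<circ> v) ` perm_ball n r u \<subseteq> G r n"
    proof
      fix p assume "p \<in> (\<lambda>v. inv u \<circ> v) ` perm_ball n r u"
      then obtain v where v: "v permutes {1..n}" "\<forall>i\<in>{1..n}. inv v i \<le> inv u i + r"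
        and pv: "p = inv u \<circ> v" unfolding ball by auto
      have "p permutes {1..n}" using pv v(1) permutes_inv[OF u] permutes_compose by blast
      moreover have "\<forall>k\<in>{1..n}. k \<le> p k + r"
      proof
        fix k assume k: "k \<in> {1..n}"
        have "v k \<in> {1..n}" using permutes_in_image[OF v(1)] k by blast
        then have "inv v (v k) \<le> inv u (v k) + r" using v(2) by blast
        then show "k \<le> p k + r" using permutes_inverses(2)[OF v(1)] pv by simp
      qed
      ultimately show "p \<in> G r n" by (simp add: G_def)
    qed
    show "(\<lambda>p. u \<circ> p) ` G r n \<subseteq> perm_ball n r u"
    proof
      fix v assume "v \<in> (\<lambda>p. u \<circ> p) ` G r n"
      then obtain p where p: "p permutes {1..n}" "\<forall>k\<in>{1..n}. k \<le> p k + r" and vp: "v = u \<circ> p"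
        unfolding G_def by auto
      have v: "v permutes {1..n}" using vp p(1) u permutes_compose by blast
      moreover have "\<forall>i\<in>{1..n}. inv v i \<le> inv u i + r"
      proof
        fix i assume i: "i \<in> {1..n}"
        define k where "k = inv v i"
        have k: "k \<in> {1..n}" unfolding k_def using permutes_in_image[OF permutes_inv[OF v]] i by blast
        have vk: "v k = i" unfolding k_def using permutes_inverses(1)[OF v] by simp
        have "inv u i = p k" using vk vp permutes_inverses(2)[OF u] by auto
        then show "inv v i \<le> inv u i + r" using p(2) k k_def by simp
      qed
      ultimately show "v \<in> perm_ball n r u" unfolding ball by simp
    qed
  qed
  then have "card (perm_ball n r u) = card (G r n)" by (rule bij_betw_same_card)
  also have "\<dots> = fact r * (r + 1) ^ (n - r)" using card_G prod_min assms(2) by simp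
  finally show ?thesis .
qed

end
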